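(* Let $\mathcal B$ be a connected building set on $[n+1]$ whose nested set complex $K_{\mathcal B}$ is a flag complex. Then for every subset $I\subseteq[n+1]$ of even cardinality, the complex $(K_{\mathcal B})_I$ is homotopy equivalent to $K^{\mathrm{odd}}_{\mathcal B|_I}$.
   Context: A building set on a finite set $S\subset\mathbb N$ is a collection $\mathcal B$ of nonempty subsets of $S$ containing every singleton, such that $I,J\in\mathcal B$, $I\cap J\neq\emptyset$ imply $I\cup J\in\mathcal B$; its connected components are its inclusion-maximal elements; it is connected if $S\in\mathcal B$; $\mathcal B|_I=\{J\in\mathcal B:J\subseteq I\}$. For a connected building set $\mathcal B$ on $[n+1]$, the nested set complex $K_{\mathcal B}$ is the simplicial complex on vertex set $\mathcal B\setminus\{[n+1]\}$ whose simplices are the subsets $N\subseteq\mathcal B\setminus\{[n+1]\}$ such that (i) any $I,J\in N$ satisfy $I\subseteq J$, $J\subseteq I$ or $I\cap J=\emptyset$, and (ii) for any $r\ge2$ pairwise disjoint $I_1,\dots,I_r\in N$, $I_1\cup\dots\cup I_r\notin\mathcal B$. A simplicial complex is flag if every set of vertices that are pairwise joined by edges forms a simplex. For $I\subseteq[n+1]$ of even cardinality, $(K_{\mathcal B})_I$ is the full subcomplex of $K_{\mathcal B}$ induced on the vertices $J$ with $|J\cap I|$ odd, and $K^{\mathrm{odd}}_{\mathcal B|_I}$ is the full subcomplex of $K_{\mathcal B}$ induced on the vertices $J\in\mathcal B$ with $J\subseteq I$ and $|J|$ odd. *)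

theory Defs
  imports "HOL-Analysis.Analysis"
begin

definition building_set :: "nat set \<Rightarrow> nat set set \<Rightarrow> bool" where
  "building_set S B \<longleftrightarrow> finite S \<and> (\<forall>J\<in>B. J \<noteq> {} \<and> J \<subseteq> S) \<and> (\<forall>i\<in>S. {i} \<in> B) \<and>
     (\<forall>I\<in>B. \<forall>J\<in>B. I \<inter> J \<noteq> {} \<longrightarrow> I \<union> J \<in> B)"

definition connected_building_set :: "nat set \<Rightarrow> nat set set \<Rightarrow> bool" where
  "connected_building_set S B \<longleftrightarrow> building_set S B \<and> S \<in> B"

definition restrict_bs :: "nat set set \<Rightarrow> nat set \<Rightarrow> nat set set" where
  "restrict_bs B I = {J \<in> B. J \<subseteq> I}"

text \<open>Simplicial complexes are represented as their set of faces (finite vertex sets),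
  including the empty face.\<close>

definition nested_set_complex :: "nat set \<Rightarrow> nat set set \<Rightarrow> nat set set set" where
  "nested_set_complex S B = {N. N \<subseteq> B - {S} \<and>
     (\<forall>I\<in>N. \<forall>J\<in>N. I \<subseteq> J \<or> J \<subseteq> I \<or> I \<inter> J = {}) \<and>
     (\<forall>M\<subseteq>N. 2 \<le> card M \<and> (\<forall>I\<in>M. \<forall>J\<in>M. I \<noteq> J \<longrightarrow> I \<inter> J = {}) \<longrightarrow> \<Union>M \<notin> B)}"

definition vertices :: "'v set set \<Rightarrow> 'v set" where
  "vertices K = {v. {v} \<in> K}"

definition flag_complex :: "'v set set \<Rightarrow> bool" where
  "flag_complex K \<longleftrightarrow> (\<forall>N. finite N \<and> N \<subseteq> vertices K \<and>
      (\<forall>u\<in>N. \<forall>v\<in>N. u \<noteq> v \<longrightarrow> {u, v} \<in> K) \<longrightarrow> N \<in> K)"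

definition full_subcomplex :: "'v set set \<Rightarrow> 'v set \<Rightarrow> 'v set set" where
  "full_subcomplex K W = {\<sigma> \<in> K. \<sigma> \<subseteq> W}"

definition K_sub :: "nat set \<Rightarrow> nat set set \<Rightarrow> nat set \<Rightarrow> nat set set set" where
  "K_sub S B I = full_subcomplex (nested_set_complex S B)
      {J \<in> vertices (nested_set_complex S B). odd (card (J \<inter> I))}"

definition K_odd :: "nat set \<Rightarrow> nat set set \<Rightarrow> nat set \<Rightarrow> nat set set set" where
  "K_odd S B I = full_subcomplex (nested_set_complex S B)
      {J \<in> vertices (nested_set_complex S B). J \<in> restrict_bs B I \<and> odd (card J)}"

text \<open>Geometric realization of a (finite) simplicial complex K: points are
  barycentric coordinate functions whose support is a nonempty face of K, with the
  subspace topology of the product topology on functions 'v \<Rightarrow> real.\<close>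
definition realization :: "'v set set \<Rightarrow> ('v \<Rightarrow> real) topology" where
  "realization K = top_of_set {f. (\<forall>v. 0 \<le> f v) \<and> finite {v. f v \<noteq> 0} \<and>
       {v. f v \<noteq> 0} \<in> K \<and> sum f {v. f v \<noteq> 0} = 1}"

end

theory Submission
  imports Defs
begin

definition RS :: "'v set set \<Rightarrow> ('v \<Rightarrow> real) set" where
  "RS K = {f. (\<forall>v. 0 \<le> f v) \<and> finite {v. f v \<noteq> 0} \<and> {v. f v \<noteq> 0} \<in> K \<and> sum f {v. f v \<noteq> 0} = 1}"

lemma realization_RS: "realization K = top_of_set (RS K)"
  by (simp add: realization_def RS_def)

lemma sum_supp:
  assumes "finite T" "{v. g v \<noteq> 0} \<subseteq> T"
  shows "sum g {v. g v \<noteq> 0} = sum g T"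
  using assms by (intro sum.mono_neutral_left) auto

definition Hm :: "'v \<Rightarrow> 'v \<Rightarrow> real \<Rightarrow> ('v \<Rightarrow> real) \<Rightarrow> ('v \<Rightarrow> real)" where
  "Hm v w t f = (\<lambda>u. f u + (if u = w then t * f v else 0) - (if u = v then t * f v else 0))"

lemma sum_Hm:
  assumes "finite T" shows "sum (Hm v w t f) T = sum f T + (if w \<in> T then t * f v else 0) - (if v \<in> T then t * f v else 0)"
  using assms by (simp add: Hm_def sum.distrib sum_subtractf)

lemma Hm_in:
  assumes down: "\<forall>\<sigma>\<in>K. \<forall>\<tau>. \<tau> \<subseteq> \<sigma> \<longrightarrow> \<tau> \<in> K"
    and vW: "v \<in> W" and wW: "w \<in> W" and vw: "v \<noteq> w"
    and dom: "\<forall>\<sigma>\<in>K. \<sigma> \<subseteq> W \<and> v \<in> \<sigma> \<longrightarrow> insert w \<sigma> \<in> K"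
    and f: "f \<in> RS (full_subcomplex K W)" and t: "0 \<le> t" "t \<le> 1"
  shows "Hm v w t f \<in> RS (full_subcomplex K W) \<and>
         (t = 1 \<longrightarrow> Hm v w t f \<in> RS (full_subcomplex K (W - {v})))"
proof -
  let ?s = "{u. f u \<noteq> 0}"
  have nn: "\<And>u. 0 \<le> f u" and fin: "finite ?s" and sK: "?s \<in> K" and sW: "?s \<subseteq> W"
    and s1: "sum f ?s = 1"
    using f by (auto simp: RS_def full_subcomplex_def)
  show ?thesis
  proof (cases "f v = 0")
    case True
    then have eq: "\<And>t. Hm v w t f = f" by (auto simp: Hm_def)
    have "?s \<subseteq> W - {v}" using sW True by auto
    then have "f \<in> RS (full_subcomplex K (W - {v}))"
      using nn fin sK s1 by (auto simp: RS_def full_subcomplex_def)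
    then show ?thesis using eq f by simp
  next
    case False
    let ?g = "Hm v w t f"
    have vs: "v \<in> ?s" using False by auto
    have ins: "insert w ?s \<in> K" using dom sK sW vs by auto
    have gnn: "0 \<le> ?g u" for u
      using nn[of u] nn[of v] t vw mult_left_le_one_le[of "f v" t]
      by (auto simp: Hm_def mult.commute intro: add_nonneg_nonneg)
    have gs: "{u. ?g u \<noteq> 0} \<subseteq> insert w ?s"
      using vw by (auto simp: Hm_def split: if_splits)
    have gfin: "finite {u. ?g u \<noteq> 0}" using gs fin finite_subset by blast
    have gK: "{u. ?g u \<noteq> 0} \<in> K" using gs ins down by blast
    have gW: "{u. ?g u \<noteq> 0} \<subseteq> W" using gs sW wW by blast
    have "sum ?g {u. ?g u \<noteq> 0} = sum ?g (insert w ?s)"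
      using gs fin by (intro sum_supp) auto
    also have "\<dots> = sum f (insert w ?s)" using vs fin by (simp add: sum_Hm)
    also have "\<dots> = sum f ?s" using fin by (intro sum_supp[symmetric]) auto
    finally have g1: "sum ?g {u. ?g u \<noteq> 0} = 1" using s1 by simp
    have A: "?g \<in> RS (full_subcomplex K W)"
      using gnn gfin gK gW g1 by (auto simp: RS_def full_subcomplex_def)
    have B: "?g \<in> RS (full_subcomplex K (W - {v}))" if "t = 1"
    proof -
      have "?g v = 0" using that vw by (simp add: Hm_def)
      then have "{u. ?g u \<noteq> 0} \<subseteq> W - {v}" using gW by auto
      then show ?thesis using gnn gfin gK g1 by (auto simp: RS_def full_subcomplex_def)
    qed
    show ?thesis using A B by blast
  qed
qed

lemma coord_snd [continuous_intros]: "continuous_on S (\<lambda>z. (snd z) i :: real)"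
  by (rule continuous_on_product_then_coordinatewise[OF continuous_on_snd[OF continuous_on_id]])

lemma cont_Hm: "continuous_on S (\<lambda>z. Hm v w (fst z) (snd z) :: 'v \<Rightarrow> real)"
proof (rule continuous_on_coordinatewise_then_product)
  fix i
  show "continuous_on S (\<lambda>z. Hm v w (fst z) (snd z) i)"
    unfolding Hm_def
    by (cases "i = w"; cases "i = v"; simp; intro continuous_intros)
qed


lemma coord_id [continuous_intros]: "continuous_on S (\<lambda>f. f i :: real)"
  by (rule continuous_on_product_then_coordinatewise[OF continuous_on_id])

lemma cont_Hm1: "continuous_on S (Hm v w t :: ('v \<Rightarrow> real) \<Rightarrow> _)"
proof (rule continuous_on_coordinatewise_then_product)
  fix i
  show "continuous_on S (\<lambda>f. Hm v w t f i)"
    unfolding Hm_def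
    by (cases "i = w"; cases "i = v"; simp; intro continuous_intros)
qed

lemma cont_Hm2: "continuous_on S (\<lambda>z. Hm v w (1 - fst z) (snd z) :: 'v \<Rightarrow> real)"
proof (rule continuous_on_coordinatewise_then_product)
  fix i
  show "continuous_on S (\<lambda>z. Hm v w (1 - fst z) (snd z) i)"
    unfolding Hm_def
    by (cases "i = w"; cases "i = v"; simp; intro continuous_intros)
qed

lemma collapse:
  assumes down: "\<forall>\<sigma>\<in>K. \<forall>\<tau>. \<tau> \<subseteq> \<sigma> \<longrightarrow> \<tau> \<in> K"
    and vW: "v \<in> W" and wW: "w \<in> W" and vw: "v \<noteq> w"
    and dom: "\<forall>\<sigma>\<in>K. \<sigma> \<subseteq> W \<and> v \<in> \<sigma> \<longrightarrow> insert w \<sigma> \<in> K"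
  shows "realization (full_subcomplex K W) homotopy_equivalent_space
         realization (full_subcomplex K (W - {v}))"
proof -
  let ?A = "RS (full_subcomplex K W)"
  let ?A' = "RS (full_subcomplex K (W - {v}))"
  have sub: "?A' \<subseteq> ?A" by (auto simp: RS_def full_subcomplex_def)
  have HA: "Hm v w t f \<in> ?A" if "f \<in> ?A" "0 \<le> t" "t \<le> 1" for f t
    using Hm_in[OF down vW wW vw dom that] by blast
  have HA': "Hm v w 1 f \<in> ?A'" if "f \<in> ?A" for f
    using Hm_in[OF down vW wW vw dom that, of 1] by simp
  have fix': "Hm v w 1 f = f" if "f \<in> ?A'" for f
  proof -
    have "f v = 0" using that by (auto simp: RS_def full_subcomplex_def)
    then show ?thesis by (auto simp: Hm_def)
  qed
  have c1: "continuous_on ?A (Hm v w 1)"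
    by (rule cont_Hm1)
  have ret: "retraction_maps (top_of_set ?A) (top_of_set ?A') (Hm v w 1) id"
    unfolding retraction_maps_def using c1 HA' sub fix' by (auto simp: continuous_on_id)
  have hom: "homotopic_with (\<lambda>x. True) (top_of_set ?A) (top_of_set ?A) (id \<circ> Hm v w 1) id"
  proof -
    let ?h = "\<lambda>z. Hm v w (1 - fst z) (snd z)"
    have a: "continuous_on ({0..1} \<times> ?A) ?h"
      by (rule cont_Hm2)
    have b: "?h \<in> {0..1} \<times> ?A \<rightarrow> ?A" using HA by auto
    have c: "\<forall>x\<in>?A. ?h (1, x) = x" by (simp add: Hm_def fun_eq_iff)
    show ?thesis
      apply (subst homotopic_with)
       apply simp
      apply simp
      apply (rule exI[of _ ?h]) using a b c by simp
  qed
  show ?thesis unfolding realization_RS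
    by (rule deformation_retraction_imp_homotopy_equivalent_space[OF hom ret])
qed


lemma nsc_iff: "N \<in> nested_set_complex S B \<longleftrightarrow> N \<subseteq> B - {S} \<and>
     (\<forall>I\<in>N. \<forall>J\<in>N. I \<subseteq> J \<or> J \<subseteq> I \<or> I \<inter> J = {}) \<and>
     (\<forall>M\<subseteq>N. 2 \<le> card M \<and> (\<forall>I\<in>M. \<forall>J\<in>M. I \<noteq> J \<longrightarrow> I \<inter> J = {}) \<longrightarrow> \<Union>M \<notin> B)"
  unfolding nested_set_complex_def by (rule mem_Collect_eq)

lemma nsc_down: "\<forall>\<sigma>\<in>nested_set_complex S B. \<forall>\<tau>. \<tau> \<subseteq> \<sigma> \<longrightarrow> \<tau> \<in> nested_set_complex S B"
proof (intro ballI allI impI)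
  fix \<sigma> \<tau> assume a: "\<sigma> \<in> nested_set_complex S B" "\<tau> \<subseteq> \<sigma>"
  have P: "\<sigma> \<subseteq> B - {S} \<and> (\<forall>I\<in>\<sigma>. \<forall>J\<in>\<sigma>. I \<subseteq> J \<or> J \<subseteq> I \<or> I \<inter> J = {}) \<and>
    (\<forall>M\<subseteq>\<sigma>. 2 \<le> card M \<and> (\<forall>I\<in>M. \<forall>J\<in>M. I \<noteq> J \<longrightarrow> I \<inter> J = {}) \<longrightarrow> \<Union> M \<notin> B)"
    using a(1) unfolding nsc_iff .
  note 1 = conjunct1[OF P] and 2 = conjunct1[OF conjunct2[OF P]] and 3 = conjunct2[OF conjunct2[OF P]]
  show "\<tau> \<in> nested_set_complex S B"
    unfolding nsc_iff
  proof (intro conjI allI impI)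
    show "\<tau> \<subseteq> B - {S}" using 1 a(2) by (rule_tac subset_trans) auto
    show "\<forall>I\<in>\<tau>. \<forall>J\<in>\<tau>. I \<subseteq> J \<or> J \<subseteq> I \<or> I \<inter> J = {}" using 2 a(2) by (auto dest: subsetD)
    fix M assume M: "M \<subseteq> \<tau>" "2 \<le> card M \<and> (\<forall>I\<in>M. \<forall>J\<in>M. I \<noteq> J \<longrightarrow> I \<inter> J = {})"
    have "M \<subseteq> \<sigma>" using M(1) a(2) by (rule subset_trans)
    then show "\<Union> M \<notin> B" using 3 M(2) by simp
  qed
qed

lemma sub2: assumes "M \<subseteq> {a, b}" "2 \<le> card M" shows "M = {a, b}"
proof (rule ccontr)
  assume "M \<noteq> {a, b}"
  then have "M \<subseteq> {a} \<or> M \<subseteq> {b}" using assms(1) by blast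
  then have "card M \<le> 1"
  proof
    assume "M \<subseteq> {a}" then have "card M \<le> card {a}" by (intro card_mono) auto
    then show ?thesis by simp
  next
    assume "M \<subseteq> {b}" then have "card M \<le> card {b}" by (intro card_mono) auto
    then show ?thesis by simp
  qed
  then show False using assms(2) by simp
qed

lemma nsc_single: "{J} \<in> nested_set_complex S B \<longleftrightarrow> J \<in> B \<and> J \<noteq> S"
proof
  assume "{J} \<in> nested_set_complex S B"
  then have "{J} \<subseteq> B - {S}" unfolding nsc_iff by (elim conjE)
  then show "J \<in> B \<and> J \<noteq> S" by simp
next
  assume h: "J \<in> B \<and> J \<noteq> S"
  show "{J} \<in> nested_set_complex S B"
    unfolding nsc_iff
  proof (intro conjI allI impI)
    show "{J} \<subseteq> B - {S}" using h by simp
    show "\<forall>I\<in>{J}. \<forall>K\<in>{J}. I \<subseteq> K \<or> K \<subseteq> I \<or> I \<inter> K = {}" by simp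
    fix M :: "nat set set" assume M: "M \<subseteq> {J}" "2 \<le> card M \<and> (\<forall>I\<in>M. \<forall>J\<in>M. I \<noteq> J \<longrightarrow> I \<inter> J = {})"
    have "card M \<le> card {J}" using M(1) by (intro card_mono) auto
    then show "\<Union> M \<notin> B" using M(2) by simp
  qed
qed

definition compat :: "nat set set \<Rightarrow> nat set \<Rightarrow> nat set \<Rightarrow> bool" where
  "compat B a b \<longleftrightarrow> (a \<subseteq> b \<or> b \<subseteq> a \<or> a \<inter> b = {}) \<and> (a \<inter> b = {} \<longrightarrow> a \<union> b \<notin> B)"

lemma nsc_edge:
  assumes "a \<noteq> b"
  shows "{a, b} \<in> nested_set_complex S B \<longleftrightarrow> a \<in> B \<and> b \<in> B \<and> a \<noteq> S \<and> b \<noteq> S \<and> compat B a b"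
proof
  assume h: "{a, b} \<in> nested_set_complex S B"
  have c2: "card {a, b} = 2" using assms by simp
  show "a \<in> B \<and> b \<in> B \<and> a \<noteq> S \<and> b \<noteq> S \<and> compat B a b"
  proof -
    have P: "{a, b} \<subseteq> B - {S} \<and> (\<forall>I\<in>{a,b}. \<forall>J\<in>{a,b}. I \<subseteq> J \<or> J \<subseteq> I \<or> I \<inter> J = {}) \<and>
      (\<forall>M\<subseteq>{a,b}. 2 \<le> card M \<and> (\<forall>I\<in>M. \<forall>J\<in>M. I \<noteq> J \<longrightarrow> I \<inter> J = {}) \<longrightarrow> \<Union>M \<notin> B)"
      using h unfolding nsc_iff .
    note s = conjunct1[OF P] and n0 = conjunct1[OF conjunct2[OF P]] and m0 = conjunct2[OF conjunct2[OF P]]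
    have n: "a \<subseteq> b \<or> b \<subseteq> a \<or> a \<inter> b = {}" using n0 by simp
    have m: "\<Union> M \<notin> B" if "M \<subseteq> {a, b}" "2 \<le> card M" "\<forall>I\<in>M. \<forall>J\<in>M. I \<noteq> J \<longrightarrow> I \<inter> J = {}" for M
      using m0 that by blast
    have "a \<union> b \<notin> B" if "a \<inter> b = {}"
    proof -
      have "\<forall>I\<in>{a,b}. \<forall>J\<in>{a,b}. I \<noteq> J \<longrightarrow> I \<inter> J = {}" using that by auto
      then have "\<Union> {a, b} \<notin> B" using m[of "{a,b}"] c2 by (simp only: subset_refl order_refl) simp
      then show ?thesis by simp
    qed
    then show ?thesis using s n unfolding compat_def by auto
  qed
next
  assume h: "a \<in> B \<and> b \<in> B \<and> a \<noteq> S \<and> b \<noteq> S \<and> compat B a b"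
  show "{a, b} \<in> nested_set_complex S B"
    unfolding nsc_iff
  proof (intro conjI ballI allI impI)
    show "{a, b} \<subseteq> B - {S}" using h by auto
  next
    fix I J assume "I \<in> {a, b}" "J \<in> {a, b}"
    then show "I \<subseteq> J \<or> J \<subseteq> I \<or> I \<inter> J = {}" using h unfolding compat_def by (auto simp: Int_commute)
  next
    fix M assume M: "M \<subseteq> {a, b}" "2 \<le> card M \<and> (\<forall>I\<in>M. \<forall>J\<in>M. I \<noteq> J \<longrightarrow> I \<inter> J = {})"
    have eq: "M = {a, b}" using sub2[OF M(1)] M(2) by simp
    have "\<forall>I\<in>{a,b}. \<forall>J\<in>{a,b}. I \<noteq> J \<longrightarrow> I \<inter> J = {}" using M(2) unfolding eq by (elim conjE)
    then have d: "a \<inter> b = {}" using assms by blast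
    have "a \<union> b \<notin> B" using h d unfolding compat_def by blast
    then show "\<Union> M \<notin> B" unfolding eq by simp
  qed
qed

lemma odd_component:
  fixes B :: "nat set set"
  assumes fin: "finite Y" and sing: "\<forall>y\<in>Y. {y} \<in> B"
    and un: "\<forall>I\<in>B. \<forall>J\<in>B. I \<inter> J \<noteq> {} \<longrightarrow> I \<union> J \<in> B"
    and odd: "odd (card Y)"
  shows "\<exists>C\<in>B. C \<subseteq> Y \<and> odd (card C) \<and> (\<forall>D\<in>B. C \<subseteq> D \<longrightarrow> D \<subseteq> Y \<longrightarrow> D = C)"
proof (rule ccontr)
  assume nex: "\<not> ?thesis"
  define F where "F y = {D\<in>B. y \<in> D \<and> D \<subseteq> Y}" for y
  have Ffin: "finite (F y)" for y
    by (rule finite_subset[of _ "Pow Y"]) (auto simp: F_def fin)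
  have "\<exists>C. C \<in> F y \<and> (\<forall>D\<in>F y. card D \<le> card C)" if "y \<in> Y" for y
  proof -
    have ne: "F y \<noteq> {}" using sing that by (auto simp: F_def)
    obtain C where "C \<in> F y" "card C = Max (card ` F y)"
      using Max_in[of "card ` F y"] Ffin ne by (metis (mono_tags, lifting) empty_is_image finite_imageI imageE)
    then show ?thesis using Ffin by (metis Max_ge finite_imageI image_eqI)
  qed
  then obtain comp where comp: "\<And>y. y \<in> Y \<Longrightarrow> comp y \<in> F y \<and> (\<forall>D\<in>F y. card D \<le> card (comp y))"
    by metis
  have cB: "comp y \<in> B" "y \<in> comp y" "comp y \<subseteq> Y" if "y \<in> Y" for y
    using comp[OF that] by (auto simp: F_def)
  have cmax: "D = comp y" if "y \<in> Y" "D \<in> B" "comp y \<subseteq> D" "D \<subseteq> Y" for y D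
  proof -
    have "D \<in> F y" using that cB[OF that(1)] by (auto simp: F_def)
    then have "card D \<le> card (comp y)" using comp[OF that(1)] by blast
    moreover have "finite D" using that(4) fin finite_subset by blast
    ultimately show ?thesis using that(3) by (metis card_seteq)
  qed
  have gmax: "\<forall>D\<in>B. comp y \<subseteq> D \<longrightarrow> D \<subseteq> Y \<longrightarrow> D = comp y" if "y \<in> Y" for y
    using cmax that by blast
  have ev: "even (card (comp y))" if "y \<in> Y" for y
    using nex cB[OF that] gmax[OF that] by blast
  have disj: "comp y = comp z \<or> comp y \<inter> comp z = {}" if "y \<in> Y" "z \<in> Y" for y z
  proof (rule ccontr)
    assume a: "\<not> ?thesis"
    then have u: "comp y \<union> comp z \<in> B" using un cB that by blast
    have "comp y \<union> comp z = comp y" using cmax[OF that(1) u] cB that by blast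
    moreover have "comp y \<union> comp z = comp z" using cmax[OF that(2) u] cB that by blast
    ultimately show False using a by blast
  qed
  let ?P = "comp ` Y"
  have UY: "\<Union> ?P = Y" using cB by blast
  have "card (\<Union> ?P) = sum card ?P"
  proof (rule card_Union_disjoint)
    show "pairwise disjnt ?P" unfolding pairwise_def disjnt_def using disj by blast
    fix A assume "A \<in> ?P"
    then obtain y where "y \<in> Y" "A = comp y" by blast
    then show "finite A" using cB(3) fin finite_subset by metis
  qed
  moreover have "even (sum card ?P)" by (rule dvd_sum) (use ev in blast)
  ultimately show False using UY odd by simp
qed


lemma vertices_nsc: "vertices (nested_set_complex S B) = B - {S}"
  unfolding vertices_def using nsc_single by blast

theorem lemma5p2:
  fixes n :: nat and B :: "nat set set" and I :: "nat set"
  assumes "connected_building_set {1..n+1} B"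
      and "flag_complex (nested_set_complex {1..n+1} B)"
      and "I \<subseteq> {1..n+1}" and "even (card I)"
  shows "realization (K_sub {1..n+1} B I)
           homotopy_equivalent_space realization (K_odd {1..n+1} B I)"
proof -
  define S where "S = {1..n+1}"
  define K where "K = nested_set_complex S B"
  have finS: "finite S" by (simp add: S_def)
  have bs: "building_set S B" using assms(1) unfolding connected_building_set_def S_def by (elim conjE)
  have P: "finite S \<and> (\<forall>J\<in>B. J \<noteq> {} \<and> J \<subseteq> S) \<and> (\<forall>i\<in>S. {i} \<in> B) \<and>
     (\<forall>I\<in>B. \<forall>J\<in>B. I \<inter> J \<noteq> {} \<longrightarrow> I \<union> J \<in> B)" using bs unfolding building_set_def .
  have Bsub: "\<And>J. J \<in> B \<Longrightarrow> J \<noteq> {} \<and> J \<subseteq> S" using P by (elim conjE) (rule bspec)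
  have sing: "\<forall>i\<in>S. {i} \<in> B" using P by (elim conjE)
  have un: "\<forall>I\<in>B. \<forall>J\<in>B. I \<inter> J \<noteq> {} \<longrightarrow> I \<union> J \<in> B" using P by (elim conjE)
  have unR: "\<And>X Y. X \<in> B \<Longrightarrow> Y \<in> B \<Longrightarrow> X \<inter> Y \<noteq> {} \<Longrightarrow> X \<union> Y \<in> B"
    using un by blast
  have flag: "flag_complex K" using assms(2) by (simp add: K_def S_def)
  have down: "\<forall>\<sigma>\<in>K. \<forall>\<tau>. \<tau> \<subseteq> \<sigma> \<longrightarrow> \<tau> \<in> K" unfolding K_def by (rule nsc_down)
  have downR: "\<And>\<sigma> \<tau>. \<sigma> \<in> K \<Longrightarrow> \<tau> \<subseteq> \<sigma> \<Longrightarrow> \<tau> \<in> K" using down by blast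
  have vert: "vertices K = B - {S}" unfolding K_def by (rule vertices_nsc)
  define VA where "VA = {J \<in> vertices K. odd (card (J \<inter> I))}"
  define VC where "VC = {J \<in> vertices K. J \<in> restrict_bs B I \<and> odd (card J)}"
  have KS: "K_sub {1..n+1} B I = full_subcomplex K VA" by (simp add: K_sub_def VA_def K_def S_def)
  have KO: "K_odd {1..n+1} B I = full_subcomplex K VC" by (simp add: K_odd_def VC_def K_def S_def)
  have VCA: "VC \<subseteq> VA"
  proof
    fix J assume "J \<in> VC"
    then have "J \<in> vertices K" "J \<subseteq> I" "odd (card J)" by (auto simp: VC_def restrict_bs_def)
    moreover then have "J \<inter> I = J" by blast
    ultimately show "J \<in> VA" by (simp add: VA_def)
  qed
  have finB: "finite B" using Bsub finS by (metis Pow_iff finite_Pow_iff finite_subset subsetI)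
  have finVA: "finite VA" unfolding VA_def vert using finB by simp
  have main: "realization (full_subcomplex K (VC \<union> X)) homotopy_equivalent_space
              realization (full_subcomplex K VC)" if "finite X" "X \<subseteq> VA - VC" for X
    using that
  proof (induction X rule: finite_psubset_induct)
    case (psubset X)
    show ?case
    proof (cases "X = {}")
      case True
      then show ?thesis by (simp add: homotopy_equivalent_space_refl)
    next
      case False
      obtain J where JX: "J \<in> X" and Jmin: "\<And>N. N \<in> X \<Longrightarrow> card J \<le> card N"
      proof -
        have "Min (card ` X) \<in> card ` X" using False psubset.hyps by simp
        then obtain J where "J \<in> X" "card J = Min (card ` X)" by auto
        moreover have "\<And>N. N \<in> X \<Longrightarrow> Min (card ` X) \<le> card N" using psubset.hyps by simp
        ultimately show ?thesis using that by metis
      qed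
      have JA: "J \<in> VA" and JC: "J \<notin> VC" using JX psubset.prems by auto
      have JB: "J \<in> B" "J \<noteq> S" and Jodd: "odd (card (J \<inter> I))" using JA vert by (auto simp: VA_def)
      have JS: "J \<subseteq> S" using Bsub JB by blast
      have finJ: "finite (J \<inter> I)" using JS finS finite_subset by blast
      have singJ: "\<forall>y\<in>J \<inter> I. {y} \<in> B" using sing JS by blast
      obtain C where CB: "C \<in> B" and CJ: "C \<subseteq> J \<inter> I" and Codd: "odd (card C)"
        and Cmax: "\<forall>D\<in>B. C \<subseteq> D \<longrightarrow> D \<subseteq> J \<inter> I \<longrightarrow> D = C"
        using odd_component[OF finJ singJ un Jodd] by blast
      have Cne: "C \<noteq> {}" using Bsub CB by blast
      have CS: "C \<noteq> S" using CJ JS JB by blast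
      have CC: "C \<in> VC" using CB CS CJ Codd vert by (auto simp: VC_def restrict_bs_def)
      have CnJ: "C \<noteq> J" using CC JC by blast
      define W where "W = VC \<union> X"
      have JW: "J \<in> W" and CW: "C \<in> W" using JX CC by (auto simp: W_def)
      have WV: "W \<subseteq> vertices K" using VCA psubset.prems by (auto simp: W_def VA_def)
      have finW: "finite W" using WV vert finB finite_subset by (metis finite_Diff)
      have edgeJC: "{J, C} \<in> K"
        unfolding K_def
        using CnJ[symmetric] JB CB CS CJ Cne unfolding nsc_edge[OF CnJ[symmetric]] compat_def by blast
      have edgeC: "{u, C} \<in> K" if uW: "u \<in> W" and uJ: "{u, J} \<in> K" and unJ: "u \<noteq> J" and unC: "u \<noteq> C" for u
      proof -
        have e: "u \<in> B \<and> J \<in> B \<and> u \<noteq> S \<and> J \<noteq> S \<and> compat B u J"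
          using uJ unfolding K_def nsc_edge[OF unJ] .
        have uB: "u \<in> B" "u \<noteq> S" "u \<noteq> {}" using e Bsub by auto
        have cuJ: "(u \<subseteq> J \<or> J \<subseteq> u \<or> u \<inter> J = {}) \<and> (u \<inter> J = {} \<longrightarrow> u \<union> J \<notin> B)"
          using e unfolding compat_def by blast
        have "compat B u C"
        proof (cases "J \<subseteq> u")
          case True
          then have "C \<subseteq> u" using CJ by blast
          then show ?thesis using Cne unfolding compat_def by blast
        next
          case False
          show ?thesis
          proof (cases "u \<inter> J = {}")
            case True
            then have d: "u \<inter> C = {}" using CJ by blast
            have "u \<union> C \<notin> B"
            proof
              assume "u \<union> C \<in> B"
              moreover have "(u \<union> C) \<inter> J \<noteq> {}"
              proof -
                obtain x where "x \<in> C" using Cne by blast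
                then have "x \<in> (u \<union> C) \<inter> J" using CJ by blast
                then show ?thesis by blast
              qed
              ultimately have "u \<union> C \<union> J \<in> B" using unR JB(1) by blast
              moreover have "u \<union> C \<union> J = u \<union> J" using CJ by blast
              ultimately show False using cuJ True by simp
            qed
            then show ?thesis using d unfolding compat_def by blast
          next
            case False2: False
            then have uJs: "u \<subseteq> J" using cuJ False by blast
            then have "u \<subset> J" using unJ by blast
            then have "card u < card J" using JS finS by (meson finite_subset psubset_card_mono)
            then have "u \<notin> X" using Jmin by force
            then have "u \<in> VC" using uW by (simp add: W_def)
            then have uI: "u \<subseteq> I" by (simp add: VC_def restrict_bs_def)
            show ?thesis
            proof (cases "u \<inter> C = {}")
              case True
              have "u \<union> C \<notin> B"
              proof
                assume h: "u \<union> C \<in> B"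
                have "u \<union> C \<subseteq> J \<inter> I" using uJs uI CJ by blast
                then have "u \<union> C = C" using Cmax h by simp
                then show False using True uB by blast
              qed
              then show ?thesis using True unfolding compat_def by blast
            next
              case False
              then have h: "u \<union> C \<in> B" using unR uB(1) CB by blast
              have "u \<union> C \<subseteq> J \<inter> I" using uJs uI CJ by blast
              then have "u \<union> C = C" using Cmax h by simp
              then have "u \<subseteq> C" by (metis Un_upper1)
              then show ?thesis using False unfolding compat_def by blast
            qed
          qed
        qed
        then show ?thesis unfolding K_def nsc_edge[OF unC] using uB CB CS by blast
      qed
      have dom: "\<forall>\<sigma>\<in>K. \<sigma> \<subseteq> W \<and> J \<in> \<sigma> \<longrightarrow> insert C \<sigma> \<in> K"
      proof (intro ballI impI)
        fix \<sigma> assume \<sigma>K: "\<sigma> \<in> K" and h: "\<sigma> \<subseteq> W \<and> J \<in> \<sigma>"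
        have "\<sigma> \<subseteq> W" using h by (elim conjE)
        then have "finite \<sigma>" using finW by (rule finite_subset)
        then have fin: "finite (insert C \<sigma>)" by simp
        have sv: "insert C \<sigma> \<subseteq> vertices K" using h WV CW by blast
        have pairs: "\<forall>u\<in>insert C \<sigma>. \<forall>v\<in>insert C \<sigma>. u \<noteq> v \<longrightarrow> {u, v} \<in> K"
        proof (intro ballI impI)
          fix u v assume u: "u \<in> insert C \<sigma>" and v: "v \<in> insert C \<sigma>" and uv: "u \<noteq> v"
          have inS: "{x, y} \<in> K" if "x \<in> \<sigma>" "y \<in> \<sigma>" for x y
          proof -
            have "{x, y} \<subseteq> \<sigma>" using that by simp
            then show ?thesis using downR[OF \<sigma>K] by simp
          qed
          have withC: "{x, C} \<in> K" if "x \<in> \<sigma>" "x \<noteq> C" for x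
          proof (cases "x = J")
            case True then show ?thesis using edgeJC by simp
          next
            case False
            have "{x, J} \<in> K" using inS that h by blast
            then show ?thesis using edgeC[of x] that h False by blast
          qed
          show "{u, v} \<in> K"
          proof (cases "u = C")
            case True
            then have vs: "v \<in> \<sigma>" "v \<noteq> C" using v uv by auto
            have "{v, C} \<in> K" using withC[OF vs] .
            moreover have "{u, v} = {v, C}" using True by blast
            ultimately show ?thesis by simp
          next
            case False
            then have u\<sigma>: "u \<in> \<sigma>" using u by blast
            show ?thesis
            proof (cases "v = C")
              case True then show ?thesis using withC[OF u\<sigma> False] by simp
            next
              case False
              then have "v \<in> \<sigma>" using v by blast
              then show ?thesis using inS[OF u\<sigma>] by blast
            qed
          qed
        qed
        show "insert C \<sigma> \<in> K" using flag fin sv pairs unfolding flag_complex_def by blast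
      qed
      have step: "realization (full_subcomplex K W) homotopy_equivalent_space
                  realization (full_subcomplex K (W - {J}))"
        by (rule collapse[OF down JW CW CnJ[symmetric] dom])
      have WJ: "W - {J} = VC \<union> (X - {J})" using JC by (auto simp: W_def)
      have IH: "realization (full_subcomplex K (VC \<union> (X - {J}))) homotopy_equivalent_space
                realization (full_subcomplex K VC)"
        using psubset.IH[of "X - {J}"] psubset.prems JX by blast
      show ?thesis using homotopy_eqv_trans[OF step[unfolded WJ] IH] by (simp add: W_def)
    qed
  qed
  have "VA = VC \<union> (VA - VC)" using VCA by blast
  then have "realization (full_subcomplex K VA) homotopy_equivalent_space realization (full_subcomplex K VC)"
    using main[of "VA - VC"] finVA by simp
  then show ?thesis unfolding KS KO .
qed

end
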